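(* Let $n=2k+1$ with $k\ge 1$. If $S$ is a strong resolving set of $S_n$, then $|S|\ge n$.
   Context: For $n\ge 3$, $S_n$ is the graph with vertex set $\{a_i,b_i,c_i,d_i : 1\le i\le n\}$ and edge set $\{a_ia_{i+1}, b_ib_{i+1}, c_ic_{i+1}, d_id_{i+1}, a_{i+1}b_i, a_ib_i, b_ic_i, c_id_i : 1\le i\le n\}$, indices taken modulo $n$. $d$ is the graph distance. A vertex $w$ strongly resolves distinct vertices $u,v$ if $d(v,w)=d(v,u)+d(u,w)$ or $d(u,w)=d(u,v)+d(v,w)$. A set $S$ is a strong resolving set if every two distinct vertices are strongly resolved by some vertex of $S$. *)

theory Defs
  imports Main
begin

(* Vertex (A,i) stands for a_{i+1}, etc.; indices are taken in {0..<n}, i.e. modulo n. *)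
datatype letter = A | B | C | D

type_synonym vertex = "letter \<times> nat"

definition Sverts :: "nat \<Rightarrow> vertex set" where
  "Sverts n = UNIV \<times> {..<n}"

definition Sedges :: "nat \<Rightarrow> vertex set set" where
  "Sedges n = (\<Union>i\<in>{..<n}.
     { {(A,i),(A,Suc i mod n)}, {(B,i),(B,Suc i mod n)},
       {(C,i),(C,Suc i mod n)}, {(D,i),(D,Suc i mod n)},
       {(A,Suc i mod n),(B,i)}, {(A,i),(B,i)}, {(B,i),(C,i)}, {(C,i),(D,i)} })"

definition Sadj :: "nat \<Rightarrow> vertex \<Rightarrow> vertex \<Rightarrow> bool" where
  "Sadj n u v \<longleftrightarrow> u \<noteq> v \<and> {u,v} \<in> Sedges n"

definition Sdist :: "nat \<Rightarrow> vertex \<Rightarrow> vertex \<Rightarrow> nat" where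
  "Sdist n u v = (LEAST k. (Sadj n ^^ k) u v)"

definition strongly_resolves :: "nat \<Rightarrow> vertex \<Rightarrow> vertex \<Rightarrow> vertex \<Rightarrow> bool" where
  "strongly_resolves n w u v \<longleftrightarrow>
     Sdist n v w = Sdist n v u + Sdist n u w \<or> Sdist n u w = Sdist n u v + Sdist n v w"

definition strong_resolving_set :: "nat \<Rightarrow> vertex set \<Rightarrow> bool" where
  "strong_resolving_set n S \<longleftrightarrow> S \<subseteq> Sverts n \<and>
     (\<forall>u\<in>Sverts n. \<forall>v\<in>Sverts n. u \<noteq> v \<longrightarrow> (\<exists>w\<in>S. strongly_resolves n w u v))"

end

theory Submission
  imports Defs
begin

definition reach :: "nat \<Rightarrow> nat \<Rightarrow> vertex \<Rightarrow> vertex \<Rightarrow> bool" where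
  "reach n m x y \<longleftrightarrow> (\<exists>m'\<le>m. (Sadj n ^^ m') x y)"

lemma Sadj_sym: "Sadj n x y \<Longrightarrow> Sadj n y x"
  unfolding Sadj_def by (auto simp: insert_commute)

lemma relpow_sym: "(Sadj n ^^ m) x y \<Longrightarrow> (Sadj n ^^ m) y x"
proof (induction m arbitrary: x y)
  case 0 then show ?case by simp
next
  case (Suc m)
  from Suc.prems obtain z where "(Sadj n ^^ m) x z" "Sadj n z y" by (rule relpowp_Suc_E)
  then show ?case using Suc.IH relpowp_Suc_I2 Sadj_sym by metis
qed

lemma reach_sym: "reach n m x y \<Longrightarrow> reach n m y x"
  unfolding reach_def using relpow_sym by blast

lemma reach_trans: "reach n a x y \<Longrightarrow> reach n b y z \<Longrightarrow> reach n (a+b) x z"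
  unfolding reach_def
proof -
  assume "\<exists>m'\<le>a. (Sadj n ^^ m') x y" "\<exists>m'\<le>b. (Sadj n ^^ m') y z"
  then obtain p q where "p \<le> a" "q \<le> b" "(Sadj n ^^ p) x y" "(Sadj n ^^ q) y z" by blast
  then have "(Sadj n ^^ (p+q)) x z" by (auto simp: relpowp_add)
  then show "\<exists>m'\<le>a+b. (Sadj n ^^ m') x z" using \<open>p \<le> a\<close> \<open>q \<le> b\<close> by (intro exI[of _ "p+q"]) auto
qed

lemma reach_mono: "reach n a x y \<Longrightarrow> a \<le> b \<Longrightarrow> reach n b x y"
  unfolding reach_def using le_trans by blast

lemma reach_refl: "reach n 0 x x"
  unfolding reach_def by auto

lemma reach_edge: "Sadj n x y \<Longrightarrow> reach n 1 x y"
  unfolding reach_def by (intro exI[of _ 1]) auto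

lemma Sdist_le: "reach n m x y \<Longrightarrow> Sdist n x y \<le> m"
  unfolding reach_def Sdist_def by (meson Least_le le_trans)

lemma Sdist_walk: "reach n m x y \<Longrightarrow> (Sadj n ^^ Sdist n x y) x y"
  unfolding reach_def Sdist_def by (meson LeastI)

lemma Sdist_0: "reach n m x y \<Longrightarrow> Sdist n x y = 0 \<Longrightarrow> x = y"
  using Sdist_walk by fastforce

lemma suc_mod_ne: "n \<ge> 2 \<Longrightarrow> i < n \<Longrightarrow> Suc i mod n \<noteq> i"
  by (metis One_nat_def Suc_1 Suc_le_lessD less_Suc_eq mod_Suc mod_less n_not_Suc_n)

lemma suc_mod_eq: "i < n \<Longrightarrow> Suc i mod n = (if Suc i = n then 0 else Suc i)"
  by (simp add: mod_Suc)

lemma edge_cyc: "n \<ge> 2 \<Longrightarrow> i < n \<Longrightarrow> Sadj n (L,i) (L, Suc i mod n)"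
  unfolding Sadj_def Sedges_def using suc_mod_ne[of n i]
  by (cases L) (auto intro!: bexI[of _ i])

lemma edge_AB: "i < n \<Longrightarrow> Sadj n (A,i) (B,i)"
  unfolding Sadj_def Sedges_def by (auto intro!: bexI[of _ i])
lemma edge_BC: "i < n \<Longrightarrow> Sadj n (B,i) (C,i)"
  unfolding Sadj_def Sedges_def by (auto intro!: bexI[of _ i])
lemma edge_CD: "i < n \<Longrightarrow> Sadj n (C,i) (D,i)"
  unfolding Sadj_def Sedges_def by (auto intro!: bexI[of _ i])

lemma reach_cyc: "n \<ge> 2 \<Longrightarrow> b < n \<Longrightarrow> reach n t (L,b) (L,(b+t) mod n)"
proof (induction t)
  case 0 then show ?case by (simp add: reach_refl)
next
  case (Suc t)
  have "(b + Suc t) mod n = Suc ((b+t) mod n) mod n" by (simp add: mod_Suc_eq)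
  moreover have "reach n 1 (L,(b+t) mod n) (L, Suc ((b+t) mod n) mod n)"
    using Suc.prems by (intro reach_edge edge_cyc) auto
  ultimately show ?case using reach_trans[OF Suc.IH[OF Suc.prems], of 1] by simp
qed

definition cdist :: "nat \<Rightarrow> nat \<Rightarrow> nat \<Rightarrow> nat" where
  "cdist n a b = (let d = (if a \<le> b then b - a else a - b) in min d (n - d))"

lemma reach_layer:
  assumes "n = 2*k+1" "k \<ge> 1" "a < n" "b < n"
  shows "reach n k (L,a) (L,b)"
proof (cases "a \<le> b")
  case True
  show ?thesis
  proof (cases "b - a \<le> k")
    case T2: True
    have e: "(a + (b-a)) mod n = b" using True assms by simp
    have "reach n (b-a) (L,a) (L,b)" using reach_cyc[of n a "b-a" L] assms unfolding e by simp
    then show ?thesis using T2 reach_mono by blast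
  next
    case False
    have "b + (n-(b-a)) = a + n" using True assms by arith
    then have e: "(b + (n-(b-a))) mod n = a" using assms(3) by (metis mod_add_self2 mod_less)
    have "reach n (n-(b-a)) (L,b) (L,a)" using reach_cyc[of n b "n-(b-a)" L] assms unfolding e by simp
    moreover have "n-(b-a) \<le> k" using False assms by arith
    ultimately show ?thesis using reach_mono reach_sym by blast
  qed
next
  case False
  show ?thesis
  proof (cases "a - b \<le> k")
    case T2: True
    have e: "(b + (a-b)) mod n = a" using False assms by simp
    have "reach n (a-b) (L,b) (L,a)" using reach_cyc[of n b "a-b" L] assms unfolding e by simp
    then show ?thesis using T2 reach_mono reach_sym by blast
  next
    case F2: False
    have "a + (n-(a-b)) = b + n" using False assms by arith
    then have e: "(a + (n-(a-b))) mod n = b" using assms(4) by (metis mod_add_self2 mod_less)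
    have "reach n (n-(a-b)) (L,a) (L,b)" using reach_cyc[of n a "n-(a-b)" L] assms unfolding e by simp
    moreover have "n-(a-b) \<le> k" using F2 assms by arith
    ultimately show ?thesis using reach_mono by blast
  qed
qed

lemma reach_vert: "b < n \<Longrightarrow> reach n 3 (L1,b) (L2,b)"
proof -
  assume b: "b < n"
  have ab: "reach n 1 (A,b) (B,b)" "reach n 1 (B,b) (A,b)"
    using reach_edge[OF edge_AB[OF b]] reach_edge[OF Sadj_sym[OF edge_AB[OF b]]] by auto
  have bc: "reach n 1 (B,b) (C,b)" "reach n 1 (C,b) (B,b)"
    using reach_edge[OF edge_BC[OF b]] reach_edge[OF Sadj_sym[OF edge_BC[OF b]]] by auto
  have cd: "reach n 1 (C,b) (D,b)" "reach n 1 (D,b) (C,b)"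
    using reach_edge[OF edge_CD[OF b]] reach_edge[OF Sadj_sym[OF edge_CD[OF b]]] by auto
  have r: "\<And>L. reach n 3 (L,b) (L,b)" using reach_refl reach_mono by blast
  have t2: "\<And>x y z. reach n 1 x y \<Longrightarrow> reach n 1 y z \<Longrightarrow> reach n 3 x z"
  proof -
    fix x y z assume "reach n 1 x y" "reach n 1 y z"
    then have "reach n (1+1) x z" by (rule reach_trans)
    then show "reach n 3 x z" by (rule reach_mono) simp
  qed
  have t3: "\<And>x y z w. reach n 1 x y \<Longrightarrow> reach n 1 y z \<Longrightarrow> reach n 1 z w \<Longrightarrow> reach n 3 x w"
  proof -
    fix x y z w assume "reach n 1 x y" "reach n 1 y z" "reach n 1 z w"
    then have "reach n (1+1+1) x w" by (meson reach_trans)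
    then show "reach n 3 x w" by (rule reach_mono) simp
  qed
  have t1: "\<And>x y. reach n 1 x y \<Longrightarrow> reach n 3 x y" using reach_mono by fastforce
  show ?thesis
    by (cases L1; cases L2) (simp_all add: r t1[OF ab(1)] t1[OF ab(2)] t1[OF bc(1)] t1[OF bc(2)]
        t1[OF cd(1)] t1[OF cd(2)] t2[OF ab(1) bc(1)] t2[OF bc(2) ab(2)] t2[OF bc(1) cd(1)]
        t2[OF cd(2) bc(2)] t3[OF ab(1) bc(1) cd(1)] t3[OF cd(2) bc(2) ab(2)])
qed

lemma reach_all:
  assumes "n = 2*k+1" "k \<ge> 1" "x \<in> Sverts n" "y \<in> Sverts n"
  shows "reach n (k+3) x y"
proof -
  obtain L1 a where x: "x = (L1,a)" "a < n" using assms(3) by (cases x) (auto simp: Sverts_def)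
  obtain L2 b where y: "y = (L2,b)" "b < n" using assms(4) by (cases y) (auto simp: Sverts_def)
  show ?thesis using reach_trans[OF reach_layer[OF assms(1,2) x(2) y(2)] reach_vert[OF y(2)]] x y by auto
qed

fun lv :: "letter \<Rightarrow> nat" where
  "lv A = 3" | "lv B = 2" | "lv C = 1" | "lv D = 0"

fun fpot :: "nat \<Rightarrow> nat \<Rightarrow> vertex \<Rightarrow> nat" where
  "fpot n i (L,j) = lv L + (if L = A then min (cdist n i j) (cdist n (Suc i mod n) j) else cdist n i j)"

lemma cd_step: "a < n \<Longrightarrow> b < n \<Longrightarrow>
   cdist n a (Suc b mod n) \<le> cdist n a b + 1 \<and> cdist n a b \<le> cdist n a (Suc b mod n) + 1"
  by (auto simp: suc_mod_eq cdist_def Let_def min_def split: if_splits)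

lemma cd_sym: "cdist n a b = cdist n b a"
  by (simp add: cdist_def Let_def)

lemma cd_shift: "a < n \<Longrightarrow> b < n \<Longrightarrow> cdist n (Suc a mod n) (Suc b mod n) = cdist n a b"
  by (auto simp: suc_mod_eq cdist_def Let_def min_def split: if_splits)

lemma Sadj_obt:
  assumes "Sadj n x y"
  obtains j where "j<n" "{x,y} \<in> { {(A,j),(A,Suc j mod n)}, {(B,j),(B,Suc j mod n)},
       {(C,j),(C,Suc j mod n)}, {(D,j),(D,Suc j mod n)},
       {(A,Suc j mod n),(B,j)}, {(A,j),(B,j)}, {(B,j),(C,j)}, {(C,j),(D,j)} }"
proof -
  from assms have "{x,y} \<in> Sedges n" unfolding Sadj_def by (rule conjunct2)
  then show ?thesis unfolding Sedges_def
    by (rule UN_E) (rule that, simp_all only: lessThan_iff)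
qed

lemma fpot_lip:
  assumes "Sadj n x y" "i < n"
  shows "fpot n i y \<le> fpot n i x + 1 \<and> fpot n i x \<le> fpot n i y + 1"
proof -
  obtain j where j: "j < n" and m: "{x,y} \<in> { {(A,j),(A,Suc j mod n)}, {(B,j),(B,Suc j mod n)},
       {(C,j),(C,Suc j mod n)}, {(D,j),(D,Suc j mod n)},
       {(A,Suc j mod n),(B,j)}, {(A,j),(B,j)}, {(B,j),(C,j)}, {(C,j),(D,j)} }"
    by (rule Sadj_obt[OF assms(1)])
  have i': "Suc i mod n < n" using assms(2) by simp
  have s1: "cdist n i (Suc j mod n) \<le> cdist n i j + 1 \<and> cdist n i j \<le> cdist n i (Suc j mod n) + 1"
    using cd_step[OF assms(2) j] .
  have s2: "cdist n (Suc i mod n) (Suc j mod n) \<le> cdist n (Suc i mod n) j + 1 \<and> cdist n (Suc i mod n) j \<le> cdist n (Suc i mod n) (Suc j mod n) + 1"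
    using cd_step[OF i' j] .
  have s3: "cdist n (Suc i mod n) (Suc j mod n) = cdist n i j" using cd_shift[OF assms(2) j] .
  have s4: "cdist n (Suc i mod n) j \<le> cdist n i j + 1 \<and> cdist n i j \<le> cdist n (Suc i mod n) j + 1"
  proof -
    have e1: "cdist n (Suc i mod n) j = cdist n j (Suc i mod n)" "cdist n i j = cdist n j i" by (rule cd_sym)+
    show ?thesis unfolding e1 by (rule cd_step[OF j assms(2)])
  qed
  from m show ?thesis unfolding insert_iff empty_iff doubleton_eq_iff
    using s1 s2 s3 s4 by (elim disjE conjE; simp add: min_def)
qed
lemma fpot_walk:
  assumes "(Sadj n ^^ m) x y" "i < n"
  shows "fpot n i y \<le> fpot n i x + m \<and> fpot n i x \<le> fpot n i y + m"
  using assms(1)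
proof (induction m arbitrary: y)
  case 0 then show ?case by simp
next
  case (Suc m)
  from Suc.prems obtain z where "(Sadj n ^^ m) x z" "Sadj n z y" by (rule relpowp_Suc_E)
  then show ?case using Suc.IH fpot_lip[OF _ assms(2)] by fastforce
qed

lemma far:
  assumes "n = 2*k+1" "k \<ge> 1" "i < n"
  shows "fpot n i (D,i) = 0" "fpot n i (A, (i+k+1) mod n) = k+3"
proof -
  show "fpot n i (D,i) = 0" by (simp add: cdist_def)
  have m: "(i+k+1) mod n = (if i+k+1 < n then i+k+1 else i+k+1-n)"
    using assms by (simp add: mod_if)
  show "fpot n i (A, (i+k+1) mod n) = k+3"
    using assms unfolding m by (auto simp: suc_mod_eq cdist_def Let_def min_def split: if_splits)
qed

lemma Sdist_lower:
  assumes "n = 2*k+1" "k \<ge> 1" "i < n" "reach n m x y"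
    "{x,y} = {(D,i), (A,(i+k+1) mod n)}"
  shows "Sdist n x y \<ge> k+3"
proof -
  have w: "(Sadj n ^^ Sdist n x y) x y" using Sdist_walk[OF assms(4)] .
  show ?thesis using fpot_walk[OF w assms(3)] far[OF assms(1-3)] assms(5)
    by (auto simp: doubleton_eq_iff)
qed

lemma key:
  assumes "n = 2*k+1" "k \<ge> 1" "i < n" "w \<in> Sverts n"
    "strongly_resolves n w (D,i) (A,(i+k+1) mod n)"
  shows "w = (D,i) \<or> w = (A,(i+k+1) mod n)"
proof -
  let ?u = "(D,i)" and ?v = "(A,(i+k+1) mod n)"
  have uV: "?u \<in> Sverts n" "?v \<in> Sverts n" using assms by (auto simp: Sverts_def)
  have R: "\<And>x y. x \<in> Sverts n \<Longrightarrow> y \<in> Sverts n \<Longrightarrow> reach n (k+3) x y"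
    using reach_all[OF assms(1,2)] by blast
  have uv: "Sdist n ?u ?v \<ge> k+3" "Sdist n ?v ?u \<ge> k+3"
    using Sdist_lower[OF assms(1-3) R[OF uV(1) uV(2)]] Sdist_lower[OF assms(1-3) R[OF uV(2) uV(1)]]
    by (auto simp: insert_commute)
  have vw: "Sdist n ?v w \<le> k+3" "Sdist n ?u w \<le> k+3"
    using Sdist_le R uV assms(4) by auto
  from assms(5) consider "Sdist n ?v w = Sdist n ?v ?u + Sdist n ?u w"
    | "Sdist n ?u w = Sdist n ?u ?v + Sdist n ?v w"
    unfolding strongly_resolves_def by blast
  then show ?thesis
  proof cases
    case 1
    then have "Sdist n ?u w = 0" using uv vw by linarith
    then show ?thesis using Sdist_0[OF R[OF uV(1) assms(4)]] by auto
  next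
    case 2
    then have "Sdist n ?v w = 0" using uv vw by linarith
    then show ?thesis using Sdist_0[OF R[OF uV(2) assms(4)]] by auto
  qed
qed

lemma letter_UNIV: "(UNIV :: letter set) = {A,B,C,D}"
  using letter.exhaust by auto

theorem lemma3p9:
  fixes n k :: nat and S :: "vertex set"
  assumes "k \<ge> 1" and "n = 2 * k + 1"
    and "strong_resolving_set n S"
  shows "card S \<ge> n"
proof -
  have sub: "S \<subseteq> Sverts n" using assms(3) unfolding strong_resolving_set_def by blast
  have fin: "finite S"
    using sub by (rule finite_subset) (simp add: Sverts_def letter_UNIV)
  have mem: "\<And>i. i < n \<Longrightarrow> (D,i) \<in> S \<or> (A,(i+k+1) mod n) \<in> S"
  proof -
    fix i assume i: "i < n"
    have "(D,i) \<in> Sverts n" "(A,(i+k+1) mod n) \<in> Sverts n" using i assms by (auto simp: Sverts_def)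
    moreover have "(D,i) \<noteq> (A,(i+k+1) mod n)" by simp
    ultimately obtain w where "w \<in> S" "strongly_resolves n w (D,i) (A,(i+k+1) mod n)"
      using assms(3) unfolding strong_resolving_set_def by blast
    then show "(D,i) \<in> S \<or> (A,(i+k+1) mod n) \<in> S"
      using key[OF assms(2,1) i] sub by blast
  qed
  define g where "g i = (if (D,i) \<in> S then (D,i) else (A,(i+k+1) mod n))" for i
  have gS: "g ` {..<n} \<subseteq> S" using mem by (auto simp: g_def)
  have inj: "inj_on g {..<n}"
  proof (rule inj_onI)
    fix i j assume ij: "i \<in> {..<n}" "j \<in> {..<n}" "g i = g j"
    have m: "\<And>x. x < n \<Longrightarrow> (x+k+1) mod n = (if x+k+1 < n then x+k+1 else x+k+1-n)"
      using assms by (simp add: mod_if)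
    show "i = j" using ij m[of i] m[of j] assms(2) unfolding g_def by (auto split: if_splits)
  qed
  have "card {..<n} \<le> card S" using card_inj_on_le[OF inj gS fin] .
  then show ?thesis by simp
qed

end
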